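(* Let $c\ge 1$ be an integer and $f(x_1,\dots,x_c)$ a multivariate polynomial with non-negative coefficients that is recursive-dependent and has a positive real fixed point $C$, i.e. $C=f(C,\dots,C)$ with $C>0$. Let $\mathcal{F}=\bigsqcup_{h\ge0}\mathcal{F}_h$ be a combinatorial class decomposed into finite subclasses whose generating functions $F_h(z)$ are non-constant polynomials with non-negative coefficients satisfying \[F_h(z)=f\bigl(F_{h-1}(z),F_{h-2}(z),\dots,F_{h-c}(z)\bigr)\quad\text{for all } h\ge c,\] and for each $h\ge0$ let $\alpha_h$ be the unique positive real solution of $F_h(z)=C$; the limit $\alpha=\lim_{h\to\infty}\alpha_h$ exists. Let $a_n$ be the number of objects of $\mathcal{F}$ of size $n$, i.e. the coefficient of $z^n$ in $F(z)=\sum_{h\ge0}F_h(z)$. Then \[a_n=\alpha^{-n}\,\theta(n)\] for a function $\theta$ growing at most sub-exponentially, i.e. $\theta(n)=o(\kappa^n)$ for every $\kappa>1$.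
   Context: The polynomial $f$ is called recursive-dependent if there is a constant $k$ (depending only on $f$) such that for any indices $i,j\ge c$ with $i\ge j+k$, there is a sequence of applications of the recurrence $F_h=f(F_{h-1},\dots,F_{h-c})$ (repeatedly substituting it for terms $F_h$ with $h\ge c$) resulting in a polynomial $P$ with $F_i=P(F_{\ell_1},\dots,F_{\ell_m})$ for some indices $0\le\ell_1<\dots<\ell_m\le i$ such that $\partial P/\partial F_j\neq 0$ (i.e. $F_j$ is among the $F_{\ell_r}$ and $P$ genuinely depends on it). *)

theory Defs
  imports Complex_Main "HOL-Computational_Algebra.Polynomial" "HOL-Library.Landau_Symbols"
begin

text \<open>A multivariate polynomial f(x_1,...,x_c) with real coefficients is represented by its
coefficient function cf on exponent vectors e :: nat => nat (e i = exponent of x_i).\<close>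

definition mpoly_wf :: "nat \<Rightarrow> ((nat \<Rightarrow> nat) \<Rightarrow> real) \<Rightarrow> bool" where
  "mpoly_wf c cf \<longleftrightarrow> finite {e. cf e \<noteq> 0} \<and>
     (\<forall>e. cf e \<noteq> 0 \<longrightarrow> (\<forall>i. i \<notin> {1..c} \<longrightarrow> e i = 0))"

definition mpoly_nonneg :: "((nat \<Rightarrow> nat) \<Rightarrow> real) \<Rightarrow> bool" where
  "mpoly_nonneg cf \<longleftrightarrow> (\<forall>e. cf e \<ge> 0)"

definition feval :: "nat \<Rightarrow> ((nat \<Rightarrow> nat) \<Rightarrow> real) \<Rightarrow> (nat \<Rightarrow> real) \<Rightarrow> real" where
  "feval c cf x = (\<Sum>e\<in>{e. cf e \<noteq> 0}. cf e * (\<Prod>i\<in>{1..c}. x i ^ e i))"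

text \<open>Expressions obtained from F_i by repeatedly applying the recurrence
F_h = f(F_{h-1},...,F_{h-c}) (h >= c).  An expression is a polynomial function of the
variables F_0, F_1, ...; a valuation is x :: nat => real (x l = value of F_l).\<close>

inductive expansion :: "nat \<Rightarrow> ((nat \<Rightarrow> nat) \<Rightarrow> real) \<Rightarrow> nat \<Rightarrow> ((nat \<Rightarrow> real) \<Rightarrow> real) \<Rightarrow> bool"
  for c cf i where
  start: "expansion c cf i (\<lambda>x. x i)"
| subst: "expansion c cf i P \<Longrightarrow> h \<ge> c \<Longrightarrow>
     expansion c cf i (\<lambda>x. P (x(h := feval c cf (\<lambda>a. x (h - a)))))"

text \<open>P genuinely depends on F_j (i.e. dP/dF_j is not the zero polynomial).\<close>
definition depends_on :: "((nat \<Rightarrow> real) \<Rightarrow> real) \<Rightarrow> nat \<Rightarrow> bool" where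
  "depends_on P j \<longleftrightarrow> (\<exists>x t. P (x(j := t)) \<noteq> P x)"

definition recursive_dependent :: "nat \<Rightarrow> ((nat \<Rightarrow> nat) \<Rightarrow> real) \<Rightarrow> bool" where
  "recursive_dependent c cf \<longleftrightarrow>
     (\<exists>k::nat. \<forall>i j. j \<ge> c \<longrightarrow> i \<ge> j + k \<longrightarrow>
        (\<exists>P. expansion c cf i P \<and> depends_on P j))"

end

theory Submission imports Defs begin

lemma poly_nn_term:
  fixes p :: "real poly"
  assumes nn: "\<And>k. coeff p k \<ge> 0" and z: "0 \<le> z"
  shows "coeff p n * z ^ n \<le> poly p z"
proof (cases "n \<le> degree p")
  case True
  have "coeff p n * z ^ n \<le> (\<Sum>i\<le>degree p. coeff p i * z ^ i)"
    by (rule member_le_sum) (use True nn z in auto)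
  then show ?thesis by (simp add: poly_altdef)
next
  case False
  then have "coeff p n = 0" by (simp add: coeff_eq_0)
  moreover have "0 \<le> (\<Sum>i\<le>degree p. coeff p i * z ^ i)"
    by (rule sum_nonneg) (use nn z in auto)
  ultimately show ?thesis by (simp add: poly_altdef)
qed

lemma poly_nn_nonneg:
  fixes p :: "real poly"
  assumes nn: "\<And>k. coeff p k \<ge> 0" and z: "0 \<le> z"
  shows "0 \<le> poly p z"
  unfolding poly_altdef by (rule sum_nonneg) (use nn z in auto)

lemma poly_nn_mono:
  fixes p :: "real poly"
  assumes nn: "\<And>k. coeff p k \<ge> 0" and "0 \<le> x" "x \<le> y"
  shows "poly p x \<le> poly p y"
  unfolding poly_altdef
  by (rule sum_mono) (use nn assms in \<open>auto intro!: mult_left_mono power_mono\<close>)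

lemma poly_nn_upper:
  fixes p :: "real poly"
  assumes nn: "\<And>k. coeff p k \<ge> 0" and low: "\<And>k. k < v \<Longrightarrow> coeff p k = 0"
    and z: "0 \<le> z" "z \<le> 1"
  shows "poly p z \<le> poly p 1 * z ^ v"
proof -
  have "poly p z = (\<Sum>i\<le>degree p. coeff p i * z ^ i)" by (simp add: poly_altdef)
  also have "\<dots> \<le> (\<Sum>i\<le>degree p. coeff p i * z ^ v)"
  proof (rule sum_mono)
    fix i assume "i \<in> {..degree p}"
    show "coeff p i * z ^ i \<le> coeff p i * z ^ v"
    proof (cases "i < v")
      case True then show ?thesis using low by simp
    next
      case False
      then have "z ^ i \<le> z ^ v" using z by (intro power_decreasing) auto
      then show ?thesis using nn by (intro mult_left_mono) auto
    qed
  qed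
  also have "\<dots> = poly p 1 * z ^ v" by (simp add: poly_altdef sum_distrib_right)
  finally show ?thesis .
qed

lemma feval_ge_term:
  assumes wf: "mpoly_wf c cf" and nn: "mpoly_nonneg cf" and x: "\<And>i. 0 \<le> x i"
    and e: "cf e \<noteq> 0"
  shows "cf e * (\<Prod>i\<in>{1..c}. x i ^ e i) \<le> feval c cf x"
  unfolding feval_def
  by (rule member_le_sum) (use wf nn x e in \<open>auto simp: mpoly_wf_def mpoly_nonneg_def intro!: mult_nonneg_nonneg prod_nonneg\<close>)

lemma feval_upper:
  assumes wf: "mpoly_wf c cf" and nn: "mpoly_nonneg cf"
    and x: "\<And>i. i \<in> {1..c} \<Longrightarrow> 0 \<le> x i \<and> x i \<le> M" and M: "M \<le> 1" and M0: "0 \<le> M"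
    and deg: "\<And>e. cf e \<noteq> 0 \<Longrightarrow> 2 \<le> (\<Sum>i\<in>{1..c}. e i)"
  shows "feval c cf x \<le> (\<Sum>e\<in>{e. cf e \<noteq> 0}. cf e) * M ^ 2"
  unfolding feval_def sum_distrib_right
proof (rule sum_mono)
  fix e assume "e \<in> {e. cf e \<noteq> 0}"
  then have e: "cf e \<noteq> 0" by simp
  have "(\<Prod>i\<in>{1..c}. x i ^ e i) \<le> (\<Prod>i\<in>{1..c}. M ^ e i)"
    by (rule prod_mono) (use x in \<open>auto intro: power_mono\<close>)
  also have "\<dots> = M ^ (\<Sum>i\<in>{1..c}. e i)" by (simp add: power_sum)
  also have "\<dots> \<le> M ^ 2" using deg[OF e] M M0 by (intro power_decreasing) auto
  finally show "cf e * (\<Prod>i\<in>{1..c}. x i ^ e i) \<le> cf e * M ^ 2"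
    using nn by (intro mult_left_mono) (auto simp: mpoly_nonneg_def)
qed


theorem theorem4:
  fixes c :: nat and cf :: "(nat \<Rightarrow> nat) \<Rightarrow> real" and C :: real
    and F :: "nat \<Rightarrow> real poly" and alpha :: "nat \<Rightarrow> real" and \<alpha> :: real
    and a :: "nat \<Rightarrow> real"
  assumes c_pos: "c \<ge> 1"
    and f_wf: "mpoly_wf c cf" and f_nonneg: "mpoly_nonneg cf"
    and f_recdep: "recursive_dependent c cf"
    and C_pos: "C > 0" and C_fix: "feval c cf (\<lambda>_. C) = C"
    and F_nat: "\<And>h n. coeff (F h) n \<in> \<nat>"
    and F_nonconst: "\<And>h. degree (F h) > 0"
    and F_rec: "\<And>h z. h \<ge> c \<Longrightarrow> poly (F h) z = feval c cf (\<lambda>i. poly (F (h - i)) z)"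
    and class_fin: "\<And>n. finite {h. coeff (F h) n \<noteq> 0}"
    and alpha_pos: "\<And>h. alpha h > 0"
    and alpha_sol: "\<And>h. poly (F h) (alpha h) = C"
    and alpha_lim: "alpha \<longlonglongrightarrow> \<alpha>"
    and a_def: "\<And>n. a n = (\<Sum>h\<in>{h. coeff (F h) n \<noteq> 0}. coeff (F h) n)"
  shows "\<exists>\<theta> :: nat \<Rightarrow> real. (\<forall>n. a n = inverse \<alpha> ^ n * \<theta> n) \<and>
           (\<forall>\<kappa>::real. \<kappa> > 1 \<longrightarrow> \<theta> \<in> o(\<lambda>n. \<kappa> ^ n))"
proof -
  have nn: "coeff (F h) k \<ge> 0" for h k using F_nat[of h k] by (auto elim!: Nats_cases)
  have ge1: "coeff (F h) k \<ge> 1" if "coeff (F h) k \<noteq> 0" for h k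
    using F_nat[of h k] that by (auto elim!: Nats_cases)
  define v where "v h = (LEAST n. coeff (F h) n \<noteq> 0)" for h
  have ex: "\<exists>n. coeff (F h) n \<noteq> 0" for h
  proof -
    have "F h \<noteq> 0" using F_nonconst[of h] by auto
    then show ?thesis by (intro exI[of _ "degree (F h)"]) simp
  qed
  have v_nz: "coeff (F h) (v h) \<noteq> 0" for h unfolding v_def by (rule LeastI_ex[OF ex])
  have v_low: "coeff (F h) k = 0" if "k < v h" for h k
    using not_less_Least[of k "\<lambda>n. coeff (F h) n \<noteq> 0"] that unfolding v_def by auto
  have Pnn: "0 \<le> poly (F h) z" if "0 \<le> z" for h z by (rule poly_nn_nonneg[OF nn that])
  have low_bound: "z ^ v h \<le> poly (F h) z" if "0 \<le> z" for h z
  proof -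
    have "z ^ v h \<le> coeff (F h) (v h) * z ^ v h"
      using ge1[OF v_nz[of h]] that by (simp add: mult_le_cancel_right1)
    also have "\<dots> \<le> poly (F h) z" by (rule poly_nn_term[OF nn that])
    finally show ?thesis .
  qed
  have stepA: "v h \<le> (\<Sum>i\<in>{1..c}. e i * v (h - i))" if h: "h \<ge> c" and e: "cf e \<noteq> 0" for h e
  proof (rule ccontr)
    define s where "s = (\<Sum>i\<in>{1..c}. e i * v (h - i))"
    assume "\<not> v h \<le> (\<Sum>i\<in>{1..c}. e i * v (h - i))"
    then have vs: "s + 1 \<le> v h" unfolding s_def by simp
    define S where "S = poly (F h) 1"
    have S1: "1 \<le> S" using low_bound[of 1 h] poly_nn_term[OF nn, of 1 h "v h"] ge1[OF v_nz[of h]]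
      unfolding S_def by simp
    have cfe: "cf e > 0" using e f_nonneg by (auto simp: mpoly_nonneg_def less_le)
    define z where "z = min 1 (cf e / (2 * S))"
    have z0: "0 < z" and z1: "z \<le> 1" and zS: "S * z \<le> cf e / 2"
      using S1 cfe by (auto simp: z_def min_def field_simps)
    have "cf e * z ^ s = cf e * (\<Prod>i\<in>{1..c}. (z ^ v (h - i)) ^ e i)"
      by (simp add: s_def power_sum power_mult[symmetric] mult.commute)
    also have "\<dots> \<le> cf e * (\<Prod>i\<in>{1..c}. poly (F (h - i)) z ^ e i)"
      using cfe z0 by (intro mult_left_mono prod_mono conjI power_mono low_bound) auto
    also have "\<dots> \<le> feval c cf (\<lambda>i. poly (F (h - i)) z)"
      by (rule feval_ge_term[OF f_wf f_nonneg _ e]) (use Pnn z0 in auto)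
    also have "\<dots> = poly (F h) z" using F_rec[OF h] by simp
    also have "\<dots> \<le> S * z ^ v h" unfolding S_def
      by (rule poly_nn_upper[OF nn v_low]) (use z0 z1 in auto)
    also have "\<dots> \<le> S * z ^ (s + 1)"
      using vs z0 z1 S1 by (intro mult_left_mono power_decreasing) auto
    also have "\<dots> = (S * z) * z ^ s" by simp
    also have "\<dots> \<le> (cf e / 2) * z ^ s" using zS z0 by (intro mult_right_mono) auto
    finally have "cf e * z ^ s \<le> (cf e / 2) * z ^ s" .
    then show False using z0 cfe by (simp add: mult_le_cancel_right)
  qed
  have stepB: "cf (\<lambda>_. 0) = 0"
  proof (rule ccontr)
    assume nz: "cf (\<lambda>_. 0) \<noteq> 0"
    have v0: "v h = 0" if "h \<ge> c" for h using stepA[OF that nz] by simp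
    have "{c..} \<subseteq> {h. coeff (F h) 0 \<noteq> 0}"
    proof
      fix h assume "h \<in> {c..}"
      then have "v h = 0" using v0 by simp
      then show "h \<in> {h. coeff (F h) 0 \<noteq> 0}" using v_nz[of h] by simp
    qed
    then have "finite {c..}" using class_fin[of 0] by (rule finite_subset)
    then show False using infinite_Ici[of c] by simp
  qed
  have stepC: "cf (\<lambda>j. if j = i then 1 else 0) = 0" if i: "i \<in> {1..c}" for i
  proof (rule ccontr)
    define u where "u = (\<lambda>j::nat. if j = i then 1 else (0::nat))"
    assume "cf (\<lambda>j. if j = i then 1 else 0) \<noteq> 0"
    then have "cf u \<noteq> 0" by (simp add: u_def)
    have su: "(\<Sum>j\<in>{1..c}. u j * v (h - j)) = v (h - i)" for h
    proof -
      have "(\<Sum>j\<in>{1..c}. u j * v (h - j)) = (\<Sum>j\<in>{1..c}. if j = i then v (h - j) else 0)"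
        by (rule sum.cong) (auto simp: u_def)
      also have "\<dots> = v (h - i)" using i by (simp add: sum.delta)
      finally show ?thesis .
    qed
    have dec: "v h \<le> v (h - i)" if "h \<ge> c" for h using stepA[OF that \<open>cf u \<noteq> 0\<close>] su by simp
    have mono: "v (c + m * i) \<le> v c" for m
    proof (induction m)
      case 0 then show ?case by simp
    next
      case (Suc m)
      have "v (c + Suc m * i) \<le> v (c + Suc m * i - i)" by (rule dec) simp
      also have "c + Suc m * i - i = c + m * i" by simp
      finally show ?case using Suc by simp
    qed
    have inf: "infinite (range (\<lambda>m. c + m * i))"
      using i by (intro range_inj_infinite) (auto simp: inj_on_def)
    have "range (\<lambda>m. c + m * i) \<subseteq> (\<Union>n\<in>{..v c}. {h. coeff (F h) n \<noteq> 0})"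
      using mono v_nz by fastforce
    moreover have "finite (\<Union>n\<in>{..v c}. {h. coeff (F h) n \<noteq> 0})" using class_fin by simp
    ultimately show False using inf finite_subset by blast
  qed
  have stepD: "2 \<le> (\<Sum>i\<in>{1..c}. e i)" if e: "cf e \<noteq> 0" for e
  proof (rule ccontr)
    assume "\<not> 2 \<le> (\<Sum>i\<in>{1..c}. e i)"
    then have disj: "(\<Sum>i\<in>{1..c}. e i) = 0 \<or> (\<Sum>i\<in>{1..c}. e i) = 1" by linarith
    have out: "e j = 0" if "j \<notin> {1..c}" for j using f_wf e that by (auto simp: mpoly_wf_def)
    from disj show False
    proof
      assume "(\<Sum>i\<in>{1..c}. e i) = 0"
      then have "e = (\<lambda>_. 0)" using out by (auto simp: fun_eq_iff)
      then show False using e stepB by simp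
    next
      assume s1: "(\<Sum>i\<in>{1..c}. e i) = 1"
      then obtain i where i: "i \<in> {1..c}" "e i \<noteq> 0" by (metis sum.neutral zero_neq_one)
      have le: "e i \<le> 1" using member_le_sum[of i "{1..c}" e] i s1 by simp
      have rs: "e i + (\<Sum>j\<in>{1..c} - {i}. e j) = 1"
        using sum.remove[of "{1..c}" i e] i s1 by simp
      have ei: "e i \<ge> 1" using i(2) by simp
      have rest: "(\<Sum>j\<in>{1..c} - {i}. e j) = 0" using rs ei by linarith
      have "e = (\<lambda>j. if j = i then 1 else 0)"
      proof
        fix j show "e j = (if j = i then 1 else 0)"
        proof (cases "j = i")
          case True then show ?thesis using i le by simp
        next
          case False
          show ?thesis
          proof (cases "j \<in> {1..c}")
            case True then show ?thesis using rest False by simp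
          next
            case False then show ?thesis using out \<open>j \<noteq> i\<close> by simp
          qed
        qed
      qed
      then show False using e stepC[OF i(1)] by simp
    qed
  qed
  define K where "K = (\<Sum>e\<in>{e. cf e \<noteq> 0}. cf e)"
  have K0: "0 \<le> K" using f_nonneg unfolding K_def mpoly_nonneg_def by (intro sum_nonneg) auto
  define t where "t = min 1 (min (C/2) (1/(2*(K+1))))"
  have t0: "0 < t" and t1: "t \<le> 1" and tC: "t \<le> C/2" using C_pos K0 by (auto simp: t_def)
  have tK: "K * t \<le> 1/2"
  proof -
    have "t \<le> 1/(2*(K+1))" by (simp add: t_def)
    then have "K * t \<le> K * (1/(2*(K+1)))" using K0 by (rule mult_left_mono)
    also have "\<dots> \<le> 1/2" using K0 by (simp add: field_simps)
    finally show ?thesis .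
  qed
  obtain H where H: "{h. coeff (F h) 0 \<noteq> 0} \<subseteq> {..<H}" using finite_nat_bounded[OF class_fin[of 0]] by blast
  have c0H: "coeff (F h) 0 = 0" if "h \<ge> H" for h using H that by force
  have vpos: "1 \<le> v h" if "h \<ge> H" for h
  proof (rule ccontr)
    assume "\<not> 1 \<le> v h"
    then have "v h = 0" by simp
    then show False using v_nz[of h] c0H[OF that] by simp
  qed
  define Sw where "Sw = (\<Sum>h\<in>{H..<H+c}. poly (F h) 1)"
  have Sw0: "0 \<le> Sw" unfolding Sw_def by (intro sum_nonneg Pnn) auto
  define z where "z = min 1 (t/(Sw+1))"
  have z0: "0 < z" and z1: "z \<le> 1" using t0 Sw0 by (auto simp: z_def)
  have zSw: "Sw * z \<le> t"
  proof -
    have "z \<le> t/(Sw+1)" by (simp add: z_def)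
    then have "Sw * z \<le> Sw * (t/(Sw+1))" using Sw0 by (rule mult_left_mono)
    also have "\<dots> \<le> t" using Sw0 t0 by (simp add: field_simps)
    finally show ?thesis .
  qed
  have base: "poly (F h) z \<le> t" if "H \<le> h" "h < H + c" for h
  proof -
    have "poly (F h) z \<le> poly (F h) 1 * z ^ v h"
      by (rule poly_nn_upper[OF nn v_low]) (use z0 z1 in auto)
    also have "\<dots> \<le> poly (F h) 1 * z"
      using vpos[OF that(1)] z0 z1 Pnn[of 1 h]
      by (intro mult_left_mono) (auto intro: power_decreasing[of 1 "v h" z, simplified])
    also have "\<dots> \<le> Sw * z"
    proof -
      have "poly (F h) 1 \<le> Sw" unfolding Sw_def
        by (rule member_le_sum) (use that Pnn in auto)
      then show ?thesis using z0 by (intro mult_right_mono) auto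
    qed
    also have "\<dots> \<le> t" by (rule zSw)
    finally show ?thesis .
  qed
  have decay: "poly (F h) z \<le> t * (1/2) ^ ((h - H) div c)" if "h \<ge> H" for h
    using that
  proof (induction h rule: less_induct)
    case (less h)
    show ?case
    proof (cases "h < H + c")
      case True
      then have "(h - H) div c = 0" using less.prems by (intro div_less) linarith
      then show ?thesis using base[OF less.prems True] by simp
    next
      case False
      define q where "q = (h - H) div c"
      have qeq: "q = Suc ((h - H - c) div c)" unfolding q_def using False c_pos
        by (intro le_div_geq) auto
      define M where "M = t * (1/2) ^ (q - 1)"
      have M0: "0 \<le> M" using t0 by (simp add: M_def)
      have Mt: "M \<le> t" unfolding M_def using t0
        by (intro mult_left_le) (auto intro: power_le_one)
      have win: "0 \<le> poly (F (h - i)) z \<and> poly (F (h - i)) z \<le> M" if i: "i \<in> {1..c}" for i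
      proof
        show "0 \<le> poly (F (h - i)) z" using Pnn z0 by simp
        have hi: "H \<le> h - i" "h - i < h" using i False c_pos by auto
        have "poly (F (h - i)) z \<le> t * (1/2) ^ ((h - i - H) div c)" by (rule less.IH[OF hi(2) hi(1)])
        also have "\<dots> \<le> M" unfolding M_def
        proof (intro mult_left_mono power_decreasing)
          have "h - H - c \<le> h - i - H" using i by auto
          then have "(h - H - c) div c \<le> (h - i - H) div c" by (rule div_le_mono)
          then show "q - 1 \<le> (h - i - H) div c" using qeq by simp
        qed (use t0 in auto)
        finally show "poly (F (h - i)) z \<le> M" .
      qed
      have "poly (F h) z = feval c cf (\<lambda>i. poly (F (h - i)) z)" using F_rec False by simp
      also have "\<dots> \<le> K * M ^ 2" unfolding K_def
        by (rule feval_upper[OF f_wf f_nonneg win]) (use Mt t1 M0 stepD in auto)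
      also have "\<dots> = (K * M) * M" by (simp add: power2_eq_square)
      also have "\<dots> \<le> (1/2) * M"
      proof (intro mult_right_mono M0)
        have "K * M \<le> K * t" using Mt K0 by (rule mult_left_mono)
        then show "K * M \<le> 1/2" using tK by simp
      qed
      also have "\<dots> = t * (1/2) ^ q" unfolding M_def using qeq by simp
      finally show ?thesis unfolding q_def .
    qed
  qed
  have alpha_gt: "z < alpha h" if "h \<ge> H" for h
  proof (rule ccontr)
    assume "\<not> z < alpha h"
    then have "C \<le> poly (F h) z" using alpha_sol[of h] poly_nn_mono[OF nn, of "alpha h" z h] alpha_pos[of h] by simp
    also have "\<dots> \<le> t * (1/2) ^ ((h - H) div c)" by (rule decay[OF that])
    also have "\<dots> \<le> t" using t0 by (intro mult_left_le) (auto intro: power_le_one)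
    finally show False using tC C_pos by simp
  qed
  have alpha_ge: "z \<le> \<alpha>"
    by (rule LIMSEQ_le_const[OF alpha_lim]) (use alpha_gt less_imp_le in blast)
  have a0: "\<alpha> > 0" using alpha_ge z0 by simp
  obtain m where m: "1/z < 2 ^ m" using real_arch_pow[of 2 "1/z"] by auto
  have hbound: "h < H + c * (m * n + 1)" if nz: "coeff (F h) n \<noteq> 0" for h n
  proof (cases "h < H")
    case True then show ?thesis by simp
  next
    case False
    define q where "q = (h - H) div c"
    have "z ^ n \<le> coeff (F h) n * z ^ n" using ge1[OF nz] z0 by (simp add: mult_le_cancel_right1)
    also have "\<dots> \<le> poly (F h) z" by (rule poly_nn_term[OF nn]) (use z0 in simp)
    also have "\<dots> \<le> t * (1/2) ^ q" unfolding q_def by (rule decay) (use False in simp)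
    also have "\<dots> \<le> (1/2) ^ q" using t1 t0 by (intro mult_left_le_one_le) auto
    finally have zq: "z ^ n \<le> (1/2) ^ q" .
    have "(2::real) ^ q \<le> (1/z) ^ n"
    proof -
      have "(2::real) ^ q * z ^ n \<le> 2 ^ q * (1/2) ^ q" using zq by (intro mult_left_mono) auto
      also have "\<dots> = 1" by (simp add: power_one_over[symmetric] power_mult_distrib[symmetric])
      finally show ?thesis using z0 by (simp add: power_one_over field_simps)
    qed
    also have "\<dots> \<le> (2 ^ m) ^ n" using m z0 by (intro power_mono) auto
    also have "\<dots> = 2 ^ (m * n)" by (simp add: power_mult)
    finally have "q \<le> m * n" by (rule power_le_imp_le_exp[rotated]) simp
    moreover have "h - H < c * (q + 1)"
    proof -
      have "h - H = c * q + (h - H) mod c" unfolding q_def by simp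
      moreover have "(h - H) mod c < c" using c_pos by simp
      ultimately show ?thesis by simp
    qed
    ultimately have "h - H < c * (m * n + 1)"
      by (meson add_le_cancel_right less_le_trans mult_le_mono2)
    then show ?thesis by simp
  qed
  have aux: "\<And>X. X * R / (R * R) = X / R" if "R > 0" for R :: real using that by (simp add: field_simps)
  define \<theta> where "\<theta> n = a n * \<alpha> ^ n" for n
  have rep: "a n = inverse \<alpha> ^ n * \<theta> n" for n
    using a0 by (simp add: \<theta>_def power_inverse field_simps)
  have anonneg: "0 \<le> a n" for n unfolding a_def by (intro sum_nonneg nn)
  have smallo: "\<theta> \<in> o(\<lambda>n. \<kappa> ^ n)" if k: "\<kappa> > 1" for \<kappa> :: real
  proof -
    define \<rho> where "\<rho> = sqrt \<kappa>"
    have r1: "\<rho> > 1" using k by (simp add: \<rho>_def)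
    have rk: "\<rho> * \<rho> = \<kappa>" using k by (simp add: \<rho>_def)
    have "\<alpha> / \<rho> < \<alpha>" using r1 a0 by (simp add: field_simps)
    from order_tendstoD(1)[OF alpha_lim this] obtain H1 where H1: "\<And>h. h \<ge> H1 \<Longrightarrow> \<alpha> / \<rho> < alpha h"
      unfolding eventually_sequentially by blast
    define D where "D = (\<Sum>h<H1. degree (F h))"
    have big: "H1 \<le> h" if "D < n" "coeff (F h) n \<noteq> 0" for h n
    proof (rule ccontr)
      assume "\<not> H1 \<le> h"
      then have "degree (F h) \<le> D" unfolding D_def by (intro member_le_sum) auto
      then show False using that coeff_eq_0[of "F h" n] by simp
    qed
    have arp: "0 < \<alpha> / \<rho>" using a0 r1 by simp
    have cb: "coeff (F h) n \<le> C * (\<rho> / \<alpha>) ^ n" if "H1 \<le> h" for h n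
    proof -
      have "coeff (F h) n * (\<alpha> / \<rho>) ^ n \<le> coeff (F h) n * alpha h ^ n"
        using H1[OF that] arp nn by (intro mult_left_mono power_mono) auto
      also have "\<dots> \<le> poly (F h) (alpha h)" by (rule poly_nn_term[OF nn]) (use alpha_pos[of h] in simp)
      also have "\<dots> = C" by (rule alpha_sol)
      finally have "coeff (F h) n * (\<alpha> / \<rho>) ^ n \<le> C" .
      then show ?thesis using arp a0 r1 by (simp add: power_divide field_simps)
    qed
    have abd: "a n \<le> real (H + c * (m * n + 1)) * (C * (\<rho> / \<alpha>) ^ n)" if "D < n" for n
    proof -
      have "a n \<le> real (card {h. coeff (F h) n \<noteq> 0}) * (C * (\<rho> / \<alpha>) ^ n)"
        unfolding a_def by (rule sum_bounded_above) (use cb big that in blast)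
      also have "\<dots> \<le> real (H + c * (m * n + 1)) * (C * (\<rho> / \<alpha>) ^ n)"
      proof (intro mult_right_mono)
        have "{h. coeff (F h) n \<noteq> 0} \<subseteq> {..<H + c * (m * n + 1)}" using hbound by auto
        then have "card {h. coeff (F h) n \<noteq> 0} \<le> H + c * (m * n + 1)"
          using card_mono[of "{..<H + c * (m * n + 1)}"] by fastforce
        then show "real (card {h. coeff (F h) n \<noteq> 0}) \<le> real (H + c * (m * n + 1))" by (simp only: of_nat_le_iff)
      qed (use C_pos a0 r1 in simp)
      finally show ?thesis .
    qed
    define g where "g n = C * real (H + c) * (1 / \<rho>) ^ n + C * real (c * m) * (real n / \<rho> ^ n)" for n
    have glim: "g \<longlonglongrightarrow> 0"
    proof -
      have l1: "(\<lambda>n. (1 / \<rho>) ^ n) \<longlonglongrightarrow> 0" using r1 by (intro LIMSEQ_power_zero) simp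
      have l2: "(\<lambda>n. real n / \<rho> ^ n) \<longlonglongrightarrow> 0" using lim_n_over_pown[of \<rho>] r1 by simp
      have "(\<lambda>n. (C * real (H + c)) * (1 / \<rho>) ^ n + (C * real (c * m)) * (real n / \<rho> ^ n))
              \<longlonglongrightarrow> (C * real (H + c)) * 0 + (C * real (c * m)) * 0"
        by (intro tendsto_add tendsto_mult tendsto_const l1 l2)
      then show ?thesis unfolding g_def by simp
    qed
    have ratio: "(\<lambda>n. \<theta> n / \<kappa> ^ n) \<longlonglongrightarrow> 0"
    proof (rule tendsto_sandwich[OF _ _ tendsto_const glim])
      show "\<forall>\<^sub>F n in sequentially. 0 \<le> \<theta> n / \<kappa> ^ n"
        using anonneg a0 k by (auto simp: \<theta>_def)
      show "\<forall>\<^sub>F n in sequentially. \<theta> n / \<kappa> ^ n \<le> g n"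
        unfolding eventually_sequentially
      proof (intro exI allI impI)
        fix n assume "Suc D \<le> n"
        then have "D < n" by simp
        have "\<theta> n \<le> real (H + c * (m * n + 1)) * (C * (\<rho> / \<alpha>) ^ n) * \<alpha> ^ n"
          unfolding \<theta>_def using abd[OF \<open>D < n\<close>] a0 by (intro mult_right_mono) auto
        also have "\<dots> = real (H + c * (m * n + 1)) * C * \<rho> ^ n"
          using a0 by (simp add: power_divide field_simps)
        finally have tb: "\<theta> n \<le> real (H + c * (m * n + 1)) * C * \<rho> ^ n" .
        have kn: "\<kappa> ^ n = \<rho> ^ n * \<rho> ^ n" using rk by (metis power_mult_distrib)
        have rp: "\<rho> ^ n > 0" using r1 by simp
        have "\<theta> n / \<kappa> ^ n \<le> real (H + c * (m * n + 1)) * C * \<rho> ^ n / (\<rho> ^ n * \<rho> ^ n)"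
          unfolding kn using tb rp by (intro divide_right_mono) auto
        also have "\<dots> = real (H + c * (m * n + 1)) * C / \<rho> ^ n"
          using aux[OF rp] by blast
        also have "\<dots> = g n" unfolding g_def using rp
          by (simp add: power_one_over add_divide_distrib[symmetric] divide_inverse algebra_simps power_inverse)
        finally show "\<theta> n / \<kappa> ^ n \<le> g n" .
      qed
    qed
    show ?thesis
      by (rule smalloI_tendsto[OF ratio]) (use k in simp)
  qed
  show ?thesis using rep smallo by blast
qed

end
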